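(* Let $\phi:\mathbb{R}^\ell\to[0,\infty)$ be continuously differentiable and let $H=\prod_{i=1}^\ell[a_i,b_i]$ with $a_i<b_i$ be a hyperrectangle with corners $z_1,\dots,z_{2^\ell}$ and side lengths $\delta z_i=b_i-a_i$, $i=1,\dots,\ell$. Let $L_1,\dots,L_\ell$ satisfy $L_i\ge|(\nabla\phi(z))_i|$ for all $z\in H$ and $i=1,\dots,\ell$. Let $\tau\in\mathbb{R}$ and $\gamma^*\ge\max_{i=1,\dots,2^\ell}\phi(z_i)$. If $$\sum_{j=1}^\ell L_j\,\delta z_j<2\gamma^*+2\tau-\frac{2\sum_{i=1}^{2^\ell}\phi(z_i)}{2^\ell},$$ then $\phi(z)<\gamma^*+\tau$ for all $z\in H$. *)

theory Defs
  imports "HOL-Analysis.Analysis"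
begin

end

theory Submission
  imports Defs
begin

lemma corners_PiE:
  fixes a b :: "real^'n"
  shows "{x. \<forall>j. x $ j = a $ j \<or> x $ j = b $ j} = vec_lambda ` (PiE UNIV (\<lambda>j. {a $ j, b $ j}))"
proof (rule set_eqI, rule iffI)
  fix x assume "x \<in> {x. \<forall>j. x $ j = a $ j \<or> x $ j = b $ j}"
  then have "vec_nth x \<in> PiE UNIV (\<lambda>j. {a $ j, b $ j})" by auto
  then show "x \<in> vec_lambda ` (PiE UNIV (\<lambda>j. {a $ j, b $ j}))"
    by (metis image_eqI vec_nth_inverse)
next
  fix x assume "x \<in> vec_lambda ` (PiE UNIV (\<lambda>j. {a $ j, b $ j}))"
  then show "x \<in> {x. \<forall>j. x $ j = a $ j \<or> x $ j = b $ j}"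
    by (auto simp: PiE_def Pi_def)
qed

lemma corners_finite_card:
  fixes a b :: "real^'n"
  assumes ab: "\<And>i. a $ i < b $ i"
  shows "finite {x. \<forall>j. x $ j = a $ j \<or> x $ j = b $ j}"
    and "card {x. \<forall>j. x $ j = a $ j \<or> x $ j = b $ j} = 2 ^ CARD('n)"
proof -
  have inj: "inj_on vec_lambda (PiE UNIV (\<lambda>j::'n. {a $ j, b $ j}))"
    by (rule inj_onI) (metis vec_lambda_inverse UNIV_I)
  have fin: "finite (PiE UNIV (\<lambda>j::'n. {a $ j, b $ j}))"
    by (rule finite_PiE) auto
  show "finite {x. \<forall>j. x $ j = a $ j \<or> x $ j = b $ j}"
    unfolding corners_PiE using fin by simp
  have "card {x. \<forall>j. x $ j = a $ j \<or> x $ j = b $ j} = card (PiE UNIV (\<lambda>j::'n. {a $ j, b $ j}))"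
    unfolding corners_PiE using inj by (simp add: card_image)
  also have "\<dots> = (\<Prod>i\<in>(UNIV::'n set). card {a $ i, b $ i})" by (simp add: card_PiE)
  also have "\<dots> = (\<Prod>i\<in>(UNIV::'n set). 2)"
    using ab by (intro prod.cong) (auto simp: card_insert_if, metis less_irrefl)
  also have "\<dots> = 2 ^ CARD('n)" by simp
  finally show "card {x. \<forall>j. x $ j = a $ j \<or> x $ j = b $ j} = 2 ^ CARD('n)" .
qed

lemma mvt_bound:
  fixes \<phi> :: "real^'n \<Rightarrow> real"
    and G :: "real^'n \<Rightarrow> real^'n"
    and a b L z c :: "real^'n"
  assumes grad: "\<And>x. (\<phi> has_derivative (\<lambda>h. G x \<bullet> h)) (at x)"
    and L: "\<And>z i. z \<in> {x. \<forall>j. a $ j \<le> x $ j \<and> x $ j \<le> b $ j} \<Longrightarrow> L $ i \<ge> \<bar>G z $ i\<bar>"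
    and z: "z \<in> {x. \<forall>j. a $ j \<le> x $ j \<and> x $ j \<le> b $ j}"
    and c: "c \<in> {x. \<forall>j. a $ j \<le> x $ j \<and> x $ j \<le> b $ j}"
  shows "\<phi> z \<le> \<phi> c + (\<Sum>j\<in>UNIV. L $ j * \<bar>z $ j - c $ j\<bar>)"
proof -
  define v where "v = z - c"
  define g where "g t = \<phi> (c + t *\<^sub>R v)" for t
  have der: "(g has_real_derivative (G (c + t *\<^sub>R v) \<bullet> v)) (at t)" for t
  proof -
    have l: "((\<lambda>t. c + t *\<^sub>R v) has_derivative (\<lambda>h. h *\<^sub>R v)) (at t)"
      by (auto intro!: derivative_eq_intros)
    have "(g has_derivative (\<lambda>h. G (c + t *\<^sub>R v) \<bullet> (h *\<^sub>R v))) (at t)"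
      unfolding g_def by (rule has_derivative_compose[OF l grad])
    moreover have "(\<lambda>h. G (c + t *\<^sub>R v) \<bullet> (h *\<^sub>R v)) = (*) (G (c + t *\<^sub>R v) \<bullet> v)"
      by (rule ext) (simp add: mult.commute)
    ultimately show ?thesis by (simp add: has_field_derivative_def)
  qed
  obtain s where s: "0 < s" "s < 1" and eq: "g 1 - g 0 = (1 - 0) * (G (c + s *\<^sub>R v) \<bullet> v)"
    using MVT2[of 0 1 g "\<lambda>t. G (c + t *\<^sub>R v) \<bullet> v"] der by auto
  define \<xi> where "\<xi> = c + s *\<^sub>R v"
  have xi: "\<xi> \<in> {x. \<forall>j. a $ j \<le> x $ j \<and> x $ j \<le> b $ j}"
  proof (clarsimp)
    fix j
    have e: "\<xi> $ j = (1 - s) * c $ j + s * z $ j" unfolding \<xi>_def v_def by (simp add: algebra_simps)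
    have "(1 - s) * a $ j \<le> (1 - s) * c $ j" "s * a $ j \<le> s * z $ j"
         "(1 - s) * c $ j \<le> (1 - s) * b $ j" "s * z $ j \<le> s * b $ j"
      using s z c by (auto intro!: mult_left_mono)
    then show "a $ j \<le> \<xi> $ j \<and> \<xi> $ j \<le> b $ j" unfolding e by (simp add: algebra_simps)
  qed
  have "\<phi> z - \<phi> c = G \<xi> \<bullet> v" using eq unfolding g_def \<xi>_def v_def by simp
  also have "\<dots> = (\<Sum>j\<in>UNIV. G \<xi> $ j * v $ j)" by (simp add: inner_vec_def)
  also have "\<dots> \<le> (\<Sum>j\<in>UNIV. L $ j * \<bar>z $ j - c $ j\<bar>)"
  proof (rule sum_mono)
    fix j
    have "G \<xi> $ j * v $ j \<le> \<bar>G \<xi> $ j\<bar> * \<bar>v $ j\<bar>" by (metis abs_ge_self abs_mult)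
    also have "\<dots> \<le> L $ j * \<bar>v $ j\<bar>" using L[OF xi, of j] by (intro mult_right_mono) auto
    finally show "G \<xi> $ j * v $ j \<le> L $ j * \<bar>z $ j - c $ j\<bar>" by (simp add: v_def)
  qed
  finally show ?thesis by simp
qed

lemma flip_sum:
  fixes a b z :: "real^'n" and j :: 'n
  assumes ab: "\<And>i. a $ i < b $ i"
    and z: "z \<in> {x. \<forall>j. a $ j \<le> x $ j \<and> x $ j \<le> b $ j}"
  shows "2 * (\<Sum>c\<in>{x. \<forall>j. x $ j = a $ j \<or> x $ j = b $ j}. \<bar>z $ j - c $ j\<bar>)
      = real (card {x. \<forall>j. x $ j = a $ j \<or> x $ j = b $ j}) * (b $ j - a $ j)"
proof -
  define C where "C = {x. \<forall>j. x $ j = a $ j \<or> x $ j = b $ j}"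
  define fl where "fl c = (\<chi> k. if k = j then (if c $ j = a $ j then b $ j else a $ j) else c $ k)" for c :: "real^'n"
  have abj: "a $ j \<noteq> b $ j" using ab[of j] by simp
  have flC: "fl c \<in> C" if "c \<in> C" for c using that unfolding C_def fl_def by auto
  have flfl: "fl (fl c) = c" if "c \<in> C" for c
    using that abj unfolding C_def fl_def by (auto simp: vec_eq_iff)
  have s1: "(\<Sum>c\<in>C. \<bar>z $ j - c $ j\<bar>) = (\<Sum>c\<in>C. \<bar>z $ j - fl c $ j\<bar>)"
    by (rule sum.reindex_bij_witness[where i=fl and j=fl]) (auto simp: flC flfl)
  have pt: "\<bar>z $ j - c $ j\<bar> + \<bar>z $ j - fl c $ j\<bar> = b $ j - a $ j" if "c \<in> C" for c
  proof -
    have "a $ j \<le> z $ j" "z $ j \<le> b $ j" using z by auto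
    moreover have "c $ j = a $ j \<or> c $ j = b $ j" using that unfolding C_def by auto
    ultimately show ?thesis unfolding fl_def using abj by auto
  qed
  have "2 * (\<Sum>c\<in>C. \<bar>z $ j - c $ j\<bar>) = (\<Sum>c\<in>C. \<bar>z $ j - c $ j\<bar> + \<bar>z $ j - fl c $ j\<bar>)"
    using s1 by (simp add: sum.distrib)
  also have "\<dots> = (\<Sum>c\<in>C. b $ j - a $ j)" using pt by (rule sum.cong[OF refl])
  also have "\<dots> = real (card C) * (b $ j - a $ j)" by simp
  finally show ?thesis unfolding C_def .
qed

theorem lemma3p10:
  fixes \<phi> :: "real^'n \<Rightarrow> real"
    and G :: "real^'n \<Rightarrow> real^'n"
    and a b L :: "real^'n"
    and \<tau> \<gamma> :: real
  assumes nonneg: "\<And>x. \<phi> x \<ge> 0"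
    and grad: "\<And>x. (\<phi> has_derivative (\<lambda>h. G x \<bullet> h)) (at x)"
    and grad_cont: "continuous_on UNIV G"
    and ab: "\<And>i. a $ i < b $ i"
    and L: "\<And>z i. z \<in> {x. \<forall>j. a $ j \<le> x $ j \<and> x $ j \<le> b $ j} \<Longrightarrow> L $ i \<ge> \<bar>G z $ i\<bar>"
    and gamma: "\<And>z. z \<in> {x. \<forall>j. x $ j = a $ j \<or> x $ j = b $ j} \<Longrightarrow> \<gamma> \<ge> \<phi> z"
    and hyp: "(\<Sum>j\<in>UNIV. L $ j * (b $ j - a $ j))
              < 2 * \<gamma> + 2 * \<tau>
                - 2 * (\<Sum>z\<in>{x. \<forall>j. x $ j = a $ j \<or> x $ j = b $ j}. \<phi> z) / 2 ^ CARD('n)"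
  shows "\<forall>z\<in>{x. \<forall>j. a $ j \<le> x $ j \<and> x $ j \<le> b $ j}. \<phi> z < \<gamma> + \<tau>"
proof
  fix z assume z: "z \<in> {x. \<forall>j. a $ j \<le> x $ j \<and> x $ j \<le> b $ j}"
  define C where "C = {x. \<forall>j. x $ j = a $ j \<or> x $ j = b $ j}"
  define N :: real where "N = 2 ^ CARD('n)"
  have finC: "finite C" unfolding C_def using corners_finite_card[OF ab] by blast
  have cardC: "real (card C) = N" unfolding C_def N_def using corners_finite_card(2)[OF ab] by simp
  have Npos: "N > 0" unfolding N_def by simp
  have CH: "c \<in> {x. \<forall>j. a $ j \<le> x $ j \<and> x $ j \<le> b $ j}" if "c \<in> C" for c
  proof (clarsimp)
    fix j
    have "c $ j = a $ j \<or> c $ j = b $ j" using that unfolding C_def by auto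
    then show "a $ j \<le> c $ j \<and> c $ j \<le> b $ j" using ab[of j] by auto
  qed
  have "(\<Sum>c\<in>C. \<phi> z) \<le> (\<Sum>c\<in>C. \<phi> c + (\<Sum>j\<in>UNIV. L $ j * \<bar>z $ j - c $ j\<bar>))"
    by (rule sum_mono) (rule mvt_bound[OF grad L z CH], auto)
  also have "\<dots> = (\<Sum>c\<in>C. \<phi> c) + (\<Sum>j\<in>UNIV. L $ j * (\<Sum>c\<in>C. \<bar>z $ j - c $ j\<bar>))"
    by (simp add: sum.distrib sum_distrib_left sum.swap[of _ C])
  also have "(\<Sum>j\<in>UNIV. L $ j * (\<Sum>c\<in>C. \<bar>z $ j - c $ j\<bar>)) = (\<Sum>j\<in>UNIV. L $ j * (N * (b $ j - a $ j) / 2))"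
  proof (rule sum.cong[OF refl])
    fix j
    have "2 * (\<Sum>c\<in>C. \<bar>z $ j - c $ j\<bar>) = N * (b $ j - a $ j)"
      using flip_sum[OF ab z, of j] cardC unfolding C_def by simp
    then show "L $ j * (\<Sum>c\<in>C. \<bar>z $ j - c $ j\<bar>) = L $ j * (N * (b $ j - a $ j) / 2)" by simp
  qed
  also have "\<dots> = N / 2 * (\<Sum>j\<in>UNIV. L $ j * (b $ j - a $ j))"
    by (simp add: sum_distrib_left) (rule sum.cong, auto simp: algebra_simps)
  finally have "N * \<phi> z \<le> (\<Sum>c\<in>C. \<phi> c) + N / 2 * (\<Sum>j\<in>UNIV. L $ j * (b $ j - a $ j))"
    using cardC by simp
  moreover have "N / 2 * (\<Sum>j\<in>UNIV. L $ j * (b $ j - a $ j)) < N / 2 * (2 * \<gamma> + 2 * \<tau> - 2 * (\<Sum>c\<in>C. \<phi> c) / N)"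
    using hyp Npos unfolding C_def N_def by (intro mult_strict_left_mono) auto
  moreover have "N / 2 * (2 * \<gamma> + 2 * \<tau> - 2 * (\<Sum>c\<in>C. \<phi> c) / N) = N * (\<gamma> + \<tau>) - (\<Sum>c\<in>C. \<phi> c)"
    using Npos by (simp add: field_simps)
  ultimately have "N * \<phi> z < N * (\<gamma> + \<tau>)" by linarith
  then show "\<phi> z < \<gamma> + \<tau>" using Npos by simp
qed

end
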